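(* Let $K$ be a field of prime characteristic $p$, $C$ a cyclic $p$-group of order $q>1$, $\tilde C$ its subgroup of index $p$, and $A\in R_{KC}$ with $A\in\mathbb{Z}\{V_p,V_{2p},\dots,V_q\}$. (i) If $A\!\downarrow_{\tilde C}=0$ then $A=0$. (ii) If $A\!\downarrow_{\tilde C}\in\mathbb{Z}\tilde V_{q/p}$ then $A\in\mathbb{Z}V_q$.
   Context: The indecomposable $KC$-modules up to isomorphism are $V_1,\dots,V_q$ with $\dim V_r=r$, and those of $K\tilde C$ are $\tilde V_1,\dots,\tilde V_{q/p}$ with $\dim\tilde V_s=s$. $R_{KC}$ and $R_{K\tilde C}$ are the Green rings (bases these indecomposables, addition from direct sum, multiplication from tensor product). $A\mapsto A\!\downarrow_{\tilde C}$ is the ring homomorphism $R_{KC}\to R_{K\tilde C}$ induced by restriction of modules. *)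

theory Defs
  imports "Jordan_Normal_Form.Jordan_Normal_Form_Uniqueness"
begin

text \<open>C = <g> is cyclic of order q = p^n over a field K (type 'a) of
characteristic p. The indecomposable KC-module V_r (1 <= r <= q) is K^r with g acting
by the unipotent Jordan block J_r(1). The subgroup of index p is generated by g^p,
and the indecomposable modules of that subgroup are the Jordan blocks J_s(1),
1 <= s <= q/p.  The restriction of V_r is K^r with g^p acting by J_r(1)^p; by
Krull-Schmidt it decomposes into a direct sum of Jordan blocks, i.e. its Jordan
normal form.  restr_mult K p r s is the multiplicity of the indecomposable of
dimension s (block (s,1)) in the restriction of V_r.\<close>

definition V_action :: "'a itself \<Rightarrow> nat \<Rightarrow> 'a::field mat" where
  "V_action K r = jordan_block r (1::'a)"

definition restr_mult :: "'a::field itself \<Rightarrow> nat \<Rightarrow> nat \<Rightarrow> nat \<Rightarrow> nat" where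
  "restr_mult K p r s =
     count (mset (SOME n_as. jordan_nf ((V_action K r) ^\<^sub>m p) n_as)) (s, 1::'a)"

text \<open>An element A of the Green ring R_KC is encoded by its integer coefficients
a r on the basis V_1, ..., V_q (a r = 0 outside {1..q}).\<close>

definition restr :: "'a::field itself \<Rightarrow> nat \<Rightarrow> nat \<Rightarrow> (nat \<Rightarrow> int) \<Rightarrow> nat \<Rightarrow> int" where
  "restr K p q a s = (\<Sum>r\<in>{1..q}. a r * int (restr_mult K p r s))"

end

theory Submission imports Defs "HOL-Computational_Algebra.Primes" begin

lemma ite10_mult: "(if P then 1 else 0) * (y::'a::comm_ring_1) = (if P then y else 0)"
  "y * (if P then 1 else 0) = (if P then y else 0)" by auto

lemma perm_similar:
  fixes A :: "'a::comm_ring_1 mat"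
  assumes A: "A \<in> carrier_mat n n"
    and f: "\<And>i. i < n \<Longrightarrow> f i < n" and g: "\<And>i. i < n \<Longrightarrow> g i < n"
    and fg: "\<And>i. i < n \<Longrightarrow> f (g i) = i" and gf: "\<And>i. i < n \<Longrightarrow> g (f i) = i"
  shows "similar_mat A (mat n n (\<lambda>(i,j). A $$ (f i, f j)))"
proof -
  define B where "B = mat n n (\<lambda>(i,j). A $$ (f i, f j))"
  define P :: "'a mat" where "P = mat n n (\<lambda>(i,k). if k = g i then 1 else 0)"
  define Q :: "'a mat" where "Q = mat n n (\<lambda>(k,j). if k = g j then 1 else 0)"
  have PB: "P * B = mat n n (\<lambda>(i,l). B $$ (g i, l))"
  proof (rule eq_matI)
    fix i l assume i: "i < dim_row (mat n n (\<lambda>(i,l). B $$ (g i, l)))" and l: "l < dim_col (mat n n (\<lambda>(i,l). B $$ (g i, l)))"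
    have "(P * B) $$ (i,l) = (\<Sum>k\<in>{0..<n}. (if k = g i then 1 else 0) * B $$ (k, l))"
      using i l by (simp add: P_def B_def scalar_prod_def)
    also have "\<dots> = B $$ (g i, l)" using g[of i] i by (simp add: ite10_mult)
    finally show "(P * B) $$ (i,l) = mat n n (\<lambda>(i,l). B $$ (g i, l)) $$ (i,l)" using i l by simp
  qed (auto simp: P_def B_def)
  have PBQ: "P * B * Q = A"
  proof (rule eq_matI)
    fix i j assume i: "i < dim_row A" and j: "j < dim_col A"
    have "(P * B * Q) $$ (i,j) = (\<Sum>k\<in>{0..<n}. B $$ (g i, k) * (if k = g j then 1 else 0))"
      using i j A by (simp add: PB Q_def scalar_prod_def)
    also have "\<dots> = B $$ (g i, g j)" using g[of j] j A by (simp add: ite10_mult)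
    also have "\<dots> = A $$ (i,j)" using g i j A fg by (simp add: B_def)
    finally show "(P * B * Q) $$ (i,j) = A $$ (i,j)" .
  qed (use A in \<open>auto simp: PB Q_def\<close>)
  have PQ: "P * Q = 1\<^sub>m n"
  proof (rule eq_matI)
    fix i j assume i: "i < dim_row (1\<^sub>m n :: 'a mat)" and j: "j < dim_col (1\<^sub>m n :: 'a mat)"
    have "(P * Q) $$ (i,j) = (\<Sum>k\<in>{0..<n}. (if k = g i then 1 else 0) * (if k = g j then 1 else (0::'a)))"
      using i j by (simp add: P_def Q_def scalar_prod_def)
    also have "\<dots> = (if g i = g j then 1 else 0)" using g[of i] i by (simp add: ite10_mult)
    also have "\<dots> = (1\<^sub>m n :: 'a mat) $$ (i,j)" using i j fg by (auto) (metis fg)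
    finally show "(P * Q) $$ (i,j) = (1\<^sub>m n :: 'a mat) $$ (i,j)" .
  qed (auto simp: P_def Q_def)
  have QP: "Q * P = 1\<^sub>m n"
  proof (rule eq_matI)
    fix i j assume i: "i < dim_row (1\<^sub>m n :: 'a mat)" and j: "j < dim_col (1\<^sub>m n :: 'a mat)"
    have "(Q * P) $$ (i,j) = (\<Sum>k\<in>{0..<n}. (if i = g k then 1 else 0) * (if j = g k then 1 else (0::'a)))"
      using i j by (simp add: P_def Q_def scalar_prod_def)
    also have "\<dots> = (\<Sum>k\<in>{0..<n}. (if k = f i then (if j = g k then 1 else (0::'a)) else 0))"
    proof (intro sum.cong refl)
      fix x assume x: "x \<in> {0..<n}"
      have "(i = g x) = (x = f i)" using x i fg gf by auto
      thus "(if i = g x then 1 else 0) * (if j = g x then 1 else (0::'a)) = (if x = f i then (if j = g x then 1 else (0::'a)) else 0)"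
        by simp
    qed
    also have "\<dots> = (if j = g (f i) then 1 else 0)" using f[of i] i by simp
    also have "\<dots> = (1\<^sub>m n :: 'a mat) $$ (i,j)" using i j gf by auto
    finally show "(Q * P) $$ (i,j) = (1\<^sub>m n :: 'a mat) $$ (i,j)" .
  qed (auto simp: P_def Q_def)
  have "similar_mat_wit A B P Q"
    unfolding similar_mat_wit_def Let_def using A PQ QP PBQ
    by (auto simp: B_def P_def Q_def)
  thus ?thesis unfolding similar_mat_def B_def by blast
qed

lemma jordan_matrix_Cons: "jordan_matrix ((n,a) # xs) =
   four_block_mat (jordan_block n a) (0\<^sub>m n (sum_list (map fst xs))) (0\<^sub>m (sum_list (map fst xs)) n) (jordan_matrix xs)"
  using jordan_matrix_carrier[of xs] unfolding jordan_matrix_def by (simp add: Let_def)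

lemma jordan_matrix_rep:
  assumes m: "m > 0"
  shows "jordan_matrix (replicate b (m, 1::'a::field)) =
    mat (b*m) (b*m) (\<lambda>(i,j). if i div m = j div m \<and> (j = i \<or> j = Suc i) then 1 else 0)"
proof (induct b)
  case 0
  show ?case unfolding jordan_matrix_def by (intro eq_matI) auto
next
  case (Suc b)
  have s: "sum_list (map fst (replicate b (m, 1::'a))) = b * m" by (induct b) auto
  show ?case unfolding replicate_Suc jordan_matrix_Cons s Suc
  proof (rule eq_matI)
    fix i j assume i: "i < dim_row (mat (Suc b * m) (Suc b * m) (\<lambda>(i,j). if i div m = j div m \<and> (j = i \<or> j = Suc i) then 1 else (0::'a)))"
      and j: "j < dim_col (mat (Suc b * m) (Suc b * m) (\<lambda>(i,j). if i div m = j div m \<and> (j = i \<or> j = Suc i) then 1 else (0::'a)))"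
    hence i': "i < m + b*m" and j': "j < m + b*m" by auto
    show "four_block_mat (jordan_block m 1) (0\<^sub>m m (b * m)) (0\<^sub>m (b * m) m)
          (mat (b * m) (b * m) (\<lambda>(i, j). if i div m = j div m \<and> (j = i \<or> j = Suc i) then 1 else 0)) $$ (i, j) =
         mat (Suc b * m) (Suc b * m) (\<lambda>(i, j). if i div m = j div m \<and> (j = i \<or> j = Suc i) then 1 else (0::'a)) $$ (i, j)"
    proof (cases "i < m")
      case True
      hence id: "i div m = 0" by simp
      show ?thesis
      proof (cases "j < m")
        case True
        thus ?thesis using \<open>i < m\<close> id i' j' by simp
      next
        case False
        hence "j div m \<noteq> 0" using m by (simp add: div_eq_0_iff)
        thus ?thesis using \<open>i < m\<close> False id i' j' by auto
      qed
    next
      case False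
      hence id: "i div m = Suc ((i - m) div m)" using m le_div_geq[of m i] by simp
      show ?thesis
      proof (cases "j < m")
        case True
        hence "j div m = 0" by simp
        thus ?thesis using \<open>\<not> i < m\<close> True id i' j' by auto
      next
        case jF: False
        hence jd: "j div m = Suc ((j - m) div m)" using m le_div_geq[of m j] by simp
        have e1: "(j = i) = (j - m = i - m)" using False jF by arith
        have e2: "(j = Suc i) = (j - m = Suc (i - m))" using False jF by arith
        show ?thesis using False jF i' j' by (simp add: id jd e1 e2)
      qed
    qed
  qed auto
qed

lemma jb_pow_p_index:
  assumes p: "prime p" and ch: "CHAR('a::field) = p" and i: "i < r" and j: "j < r"
  shows "(jordan_block r (1::'a) ^\<^sub>m p) $$ (i,j) = (if j = i \<or> j = i + p then 1 else 0)"
proof -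
  have e: "(jordan_block r (1::'a) ^\<^sub>m p) $$ (i,j) = (if i \<le> j then of_nat (p choose (j - i)) else 0)"
    unfolding jordan_block_pow using i j by simp
  show ?thesis
  proof (cases "i \<le> j")
    case False thus ?thesis using e by auto
  next
    case True
    define d where "d = j - i"
    have jd: "j = i + d" using True d_def by simp
    have p0: "p > 0" using p prime_gt_0_nat by blast
    show ?thesis
    proof (cases "d = 0 \<or> d = p")
      case True thus ?thesis using e jd p0 by auto
    next
      case nd: False
      have "of_nat (p choose d) = (0::'a)"
      proof (cases "d < p")
        case True
        have "p dvd (p choose d)" using dvd_choose_prime[OF True _ _ p] nd p0 by auto
        thus ?thesis using ch by (simp add: of_nat_eq_0_iff_char_dvd)
      next
        case False
        hence "p < d" using nd by auto
        have "p choose d = 0" using \<open>p < d\<close> binomial_eq_0 by blast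
        then show ?thesis by (metis of_nat_0)
      qed
      moreover have "\<not> (j = i \<or> j = i + p)" using nd jd by auto
      ultimately show ?thesis using e jd by simp
    qed
  qed
qed

lemma digit_eq:
  fixes b b' t t' p :: nat
  assumes "b < p" "b' < p"
  shows "(b' + p*t' = b + p*t) = (b' = b \<and> t' = t)"
proof
  assume h: "b' + p*t' = b + p*t"
  have "(b' + p*t') mod p = (b + p*t) mod p" using h by simp
  hence "b' = b" using assms by simp
  moreover have "(b' + p*t') div p = (b + p*t) div p" using h by simp
  hence "t' = t" using assms by simp
  ultimately show "b' = b \<and> t' = t" by simp
qed auto


lemma restr_jnf:
  assumes p: "prime p" and ch: "CHAR('a::field) = p" and m: "m > 0"
  shows "jordan_nf (jordan_block (p*m) (1::'a) ^\<^sub>m p) (replicate p (m, 1))"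
proof -
  let ?A = "jordan_block (p*m) (1::'a) ^\<^sub>m p"
  let ?n = "p*m"
  have p0: "p > 0" using p prime_gt_0_nat by blast
  define f where "f x = x div m + p * (x mod m)" for x
  define g where "g y = (y mod p) * m + y div p" for y
  have fl: "f x < ?n" if "x < ?n" for x
  proof -
    have "x div m < p" using that m by (simp add: div_less_iff_less_mult mult.commute)
    moreover have "x mod m < m" using m by simp
    hence "x mod m + 1 \<le> m" by simp
    hence "p * (x mod m + 1) \<le> p * m" by (rule mult_le_mono2)
    ultimately show ?thesis unfolding f_def by (simp add: algebra_simps)
  qed
  have gl: "g y < ?n" if "y < ?n" for y
  proof -
    have "y div p < m" using that p0 by (simp add: div_less_iff_less_mult mult.commute)
    moreover have "y mod p < p" using p0 by simp
    hence "y mod p + 1 \<le> p" by simp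
    hence "(y mod p + 1) * m \<le> p * m" by (rule mult_le_mono1)
    ultimately show ?thesis unfolding g_def by (simp add: algebra_simps)
  qed
  have fg: "f (g y) = y" if "y < ?n" for y
  proof -
    have "y div p < m" using that p0 by (simp add: div_less_iff_less_mult mult.commute)
    hence "g y div m = y mod p" "g y mod m = y div p" unfolding g_def using m by auto
    thus ?thesis unfolding f_def by simp
  qed
  have gf: "g (f x) = x" if "x < ?n" for x
  proof -
    have "x div m < p" using that m by (simp add: div_less_iff_less_mult mult.commute)
    hence "f x mod p = x div m" "f x div p = x mod m" unfolding f_def using p0 by auto
    thus ?thesis unfolding g_def by simp
  qed
  have key: "?A $$ (f i, f j) = (if i div m = j div m \<and> (j = i \<or> j = Suc i) then 1 else 0)"
    if i: "i < ?n" and j: "j < ?n" for i j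
  proof -
    have e: "?A $$ (f i, f j) = (if f j = f i \<or> f j = f i + p then 1 else 0)"
      using jb_pow_p_index[OF p ch fl[OF i] fl[OF j]] .
    have bi: "i div m < p" using i m by (simp add: div_less_iff_less_mult mult.commute)
    have bj: "j div m < p" using j m by (simp add: div_less_iff_less_mult mult.commute)
    have c1: "(f j = f i) = (j div m = i div m \<and> j mod m = i mod m)"
      unfolding f_def by (rule digit_eq[OF bi bj])
    have c2: "(f j = f i + p) = (j div m = i div m \<and> j mod m = Suc (i mod m))"
    proof -
      have "f i + p = i div m + p * Suc (i mod m)" unfolding f_def by simp
      hence "(f j = f i + p) = (j div m + p * (j mod m) = i div m + p * Suc (i mod m))"
        unfolding f_def by (simp add: algebra_simps)
      also have "\<dots> = (j div m = i div m \<and> j mod m = Suc (i mod m))" by (rule digit_eq[OF bi bj])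
      finally show ?thesis .
    qed
    have d1: "(j = i) = (j div m = i div m \<and> j mod m = i mod m)"
      by (metis div_mult_mod_eq)
    have d2: "(i div m = j div m \<and> j = Suc i) = (j div m = i div m \<and> j mod m = Suc (i mod m))"
    proof
      assume h: "i div m = j div m \<and> j = Suc i"
      have "j = m * (j div m) + j mod m" "i = m * (i div m) + i mod m" by simp_all
      moreover have "m * (i div m) = m * (j div m)" using h by simp
      ultimately show "j div m = i div m \<and> j mod m = Suc (i mod m)" using h by linarith
    next
      assume h: "j div m = i div m \<and> j mod m = Suc (i mod m)"
      have "j = m * (j div m) + j mod m" "i = m * (i div m) + i mod m" by simp_all
      moreover have "m * (i div m) = m * (j div m)" using h by simp
      ultimately show "i div m = j div m \<and> j = Suc i" using h by linarith
    qed
    show ?thesis unfolding e c1 c2 using d1 d2 by auto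
  qed
  have eqm: "mat ?n ?n (\<lambda>(i,j). ?A $$ (f i, f j)) = jordan_matrix (replicate p (m, 1::'a))"
    unfolding jordan_matrix_rep[OF m] by (rule eq_matI) (auto simp: key)
  have "similar_mat ?A (mat ?n ?n (\<lambda>(i,j). ?A $$ (f i, f j)))"
    by (rule perm_similar[OF _ fl gl fg gf]) simp
  hence "similar_mat ?A (jordan_matrix (replicate p (m, 1::'a)))" unfolding eqm .
  moreover have "0 \<notin> fst ` set (replicate p (m, 1::'a))" using m by auto
  ultimately show ?thesis unfolding jordan_nf_def by simp
qed

lemma count_list_len: "count_list xs x = length (filter ((=) x) xs)"
  by (induct xs) auto

lemma restr_mult_val:
  assumes p: "prime p" and ch: "CHAR('a::field) = p" and m: "m > 0" and s: "s > 0"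
  shows "restr_mult (K::'a itself) p (p*m) s = (if s = m then p else 0)"
proof -
  have jnf0: "jordan_nf ((V_action K (p*m)) ^\<^sub>m p) (replicate p (m, 1::'a))"
    unfolding V_action_def by (rule restr_jnf[OF p ch m])
  define n_as where "n_as = (SOME n_as. jordan_nf ((V_action K (p*m)) ^\<^sub>m p) n_as)"
  have jnf: "jordan_nf ((V_action K (p*m)) ^\<^sub>m p) n_as"
    unfolding n_as_def by (rule someI, rule jnf0)
  have "restr_mult K p (p*m) s = count_list n_as (s, 1)"
    unfolding restr_mult_def n_as_def count_mset by simp
  also have "\<dots> = length (filter ((=) (s,1)) n_as)" by (rule count_list_len)
  also have "\<dots> = compute_nr_of_jordan_blocks ((V_action K (p*m)) ^\<^sub>m p) 1 s"
    using compute_nr_of_jordan_blocks[OF jnf] s by simp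
  also have "\<dots> = length (filter ((=) (s,1)) (replicate p (m, 1::'a)))"
    using compute_nr_of_jordan_blocks[OF jnf0] s by simp
  also have "\<dots> = (if s = m then p else 0)" by (induct p) auto
  finally show ?thesis .
qed

theorem lemma4p1:
  fixes K :: "'a::field itself" and p q n :: nat and a :: "nat \<Rightarrow> int"
  assumes "prime p" and "CHAR('a) = p"
    and "n \<ge> 1" and "q = p ^ n"
    and "\<forall>r. r \<notin> {1..q} \<longrightarrow> a r = 0"
    and "\<forall>r. a r \<noteq> 0 \<longrightarrow> p dvd r"
  shows "((\<forall>s\<in>{1..q div p}. restr K p q a s = 0) \<longrightarrow> (\<forall>r. a r = 0))
       \<and> ((\<forall>s\<in>{1..q div p}. s \<noteq> q div p \<longrightarrow> restr K p q a s = 0)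
            \<longrightarrow> (\<forall>r. r \<noteq> q \<longrightarrow> a r = 0))"
proof -
  note p = assms(1) and ch = assms(2) and sup = assms(5) and dv = assms(6)
  have p0: "p > 0" using p prime_gt_0_nat by blast
  have pq: "p dvd q" using assms(3,4) by (simp add: dvd_power)
  have R: "restr K p q a s = a (p*s) * int p" if s: "s \<in> {1..q div p}" for s
  proof -
    have "restr K p q a s = (\<Sum>r\<in>{1..q}. if r = p*s then a r * int p else 0)"
      unfolding restr_def
    proof (rule sum.cong[OF refl])
      fix r assume r: "r \<in> {1..q}"
      show "a r * int (restr_mult K p r s) = (if r = p*s then a r * int p else 0)"
      proof (cases "a r = 0")
        case True thus ?thesis by auto
      next
        case False
        then obtain m where rm: "r = p*m" using dv by (meson dvdE)
        have m: "m > 0" using r rm by (cases m) auto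
        have "restr_mult K p r s = (if s = m then p else 0)"
          unfolding rm by (rule restr_mult_val[OF p ch m]) (use s in auto)
        moreover have "(r = p*s) = (s = m)" using rm p0 by auto
        ultimately show ?thesis by auto
      qed
    qed
    also have "\<dots> = a (p*s) * int p"
    proof -
      have "p * s \<le> p * (q div p)" using s by simp
      also have "\<dots> = q" using pq by simp
      finally have "p*s \<in> {1..q}" using s p0 by auto
      thus ?thesis by simp
    qed
    finally show ?thesis .
  qed
  have dec: "\<exists>m. r = p*m \<and> m \<in> {1..q div p}" if ar: "a r \<noteq> 0" for r
  proof -
    obtain m where rm: "r = p*m" using dv ar by (meson dvdE)
    have r: "r \<in> {1..q}" using sup ar by blast
    have "m \<ge> 1" using r rm by (cases m) auto
    moreover have "p * m \<le> p * (q div p)" using r rm pq by simp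
    hence "m \<le> q div p" using p0 by simp
    ultimately show ?thesis using rm by auto
  qed
  show ?thesis
  proof (intro conjI impI allI)
    fix r assume h: "\<forall>s\<in>{1..q div p}. restr K p q a s = 0"
    show "a r = 0"
    proof (rule ccontr)
      assume "a r \<noteq> 0"
      then obtain m where rm: "r = p*m" and m: "m \<in> {1..q div p}" using dec by blast
      have "a r * int p = 0" using h R[OF m] m rm by simp
      thus False using \<open>a r \<noteq> 0\<close> p0 by simp
    qed
  next
    fix r assume h: "\<forall>s\<in>{1..q div p}. s \<noteq> q div p \<longrightarrow> restr K p q a s = 0" and rq: "r \<noteq> q"
    show "a r = 0"
    proof (rule ccontr)
      assume "a r \<noteq> 0"
      then obtain m where rm: "r = p*m" and m: "m \<in> {1..q div p}" using dec by blast
      have "m \<noteq> q div p" using rq rm pq by auto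
      hence "a r * int p = 0" using h R[OF m] m rm by simp
      thus False using \<open>a r \<noteq> 0\<close> p0 by simp
    qed
  qed
qed

end
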